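(* For every $r\in[0,1]$, the density of $1$'s in $\operatorname{Mix}(0^\omega,1^\omega,r)$ exists and equals $r$.
   Context: For $X,Y\in2^\omega$, $(X\oplus Y)(2n)=X(n)$, $(X\oplus Y)(2n+1)=Y(n)$. The map $b:[0,1]\to2^\omega$ is defined recursively by $b(0)=0^\omega$, $b(1)=1^\omega$, $b(r)=0^\omega\oplus b(2r)$ for $0<r\le1/2$, $b(r)=b(2r-1)\oplus1^\omega$ for $1/2\le r<1$. Chunks: $n_j=\sum_{i<j}i$, $I_j=[n_j,n_{j+1})$. $\operatorname{Mix}(X_0,X_1,r)$ is the sequence whose restriction to $I_j$ equals $X_{b(r)(j)}\restriction I_j$ for every $j$. *)

theory Defs
  imports Complex_Main
begin

text \<open>Elements of Cantor space 2^omega are modelled as nat => bool (True = 1, False = 0).\<close>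

type_synonym cantor = "nat \<Rightarrow> bool"

definition join :: "cantor \<Rightarrow> cantor \<Rightarrow> cantor" (infixl "\<oplus>\<^sub>c" 65) where
  "X \<oplus>\<^sub>c Y = (\<lambda>m. if even m then X (m div 2) else Y (m div 2))"

definition zeros :: cantor where "zeros = (\<lambda>_. False)"
definition ones :: cantor where "ones = (\<lambda>_. True)"

text \<open>The recursive specification of b on [0,1]; outside [0,1] we fix the value zeros
  so that the specification determines a unique function.\<close>
definition b_spec :: "(real \<Rightarrow> cantor) \<Rightarrow> bool" where
  "b_spec f \<longleftrightarrow>
     f 0 = zeros \<and> f 1 = ones \<and>
     (\<forall>r. 0 < r \<and> r \<le> 1/2 \<longrightarrow> f r = zeros \<oplus>\<^sub>c f (2*r)) \<and>
     (\<forall>r. 1/2 \<le> r \<and> r < 1 \<longrightarrow> f r = f (2*r - 1) \<oplus>\<^sub>c ones) \<and>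
     (\<forall>r. r \<notin> {0..1} \<longrightarrow> f r = zeros)"

definition b :: "real \<Rightarrow> cantor" where
  "b = (THE f. b_spec f)"

definition chunk_start :: "nat \<Rightarrow> nat" where
  "chunk_start j = (\<Sum>i<j. i)"

definition chunk :: "nat \<Rightarrow> nat set" where
  "chunk j = {chunk_start j..<chunk_start (Suc j)}"

definition Mix :: "cantor \<Rightarrow> cantor \<Rightarrow> real \<Rightarrow> cantor" where
  "Mix X0 X1 r = (THE Z. \<forall>j. \<forall>k\<in>chunk j. Z k = (if b r j then X1 k else X0 k))"

definition has_density :: "cantor \<Rightarrow> real \<Rightarrow> bool" where
  "has_density Z d \<longleftrightarrow> (\<lambda>n. real (card {k. k < n \<and> Z k}) / real n) \<longlonglongrightarrow> d"

end

theory Submission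
  imports Defs "HOL-Library.Discrete_Functions" "HOL-Real_Asymp.Real_Asymp"
begin

function bb :: "real \<Rightarrow> nat \<Rightarrow> bool" where
  "bb r m = (if r < 0 \<or> r > 1 then False else if r = 0 then False else if r = 1 then True
     else if m = 0 then False
     else if r \<le> 1/2 then (odd m \<and> bb (2*r) (m div 2)) else (odd m \<or> bb (2*r-1) (m div 2)))"
  by auto
termination by (relation "measure (\<lambda>(r,m). m)") auto

declare bb.simps[simp del]

lemma bb0[simp]: "bb 0 m = False" by (simp add: bb.simps)
lemma bb1[simp]: "bb 1 m = True" by (simp add: bb.simps)

lemma bb_low: "0<r \<Longrightarrow> r \<le> 1/2 \<Longrightarrow> m>0 \<Longrightarrow> bb r m = (odd m \<and> bb (2*r) (m div 2))"
  by (subst bb.simps) auto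
lemma bb_high: "1/2<r \<Longrightarrow> r<1 \<Longrightarrow> m>0 \<Longrightarrow> bb r m = (odd m \<or> bb (2*r-1) (m div 2))"
  by (subst bb.simps) auto
lemma bb_zero: "0\<le>r \<Longrightarrow> r<1 \<Longrightarrow> bb r 0 = False"
  by (subst bb.simps) auto
lemma bb_out: "r \<notin> {0..1} \<Longrightarrow> bb r m = False"
  by (subst bb.simps) auto

lemma bb_spec: "b_spec bb"
  unfolding b_spec_def
proof (intro conjI allI impI)
  show "bb 0 = zeros" by (rule ext) (simp add: zeros_def)
  show "bb 1 = ones" by (rule ext) (simp add: ones_def)
  fix r :: real
  { assume a: "0 < r \<and> r \<le> 1/2"
    show "bb r = zeros \<oplus>\<^sub>c bb (2*r)"
    proof (rule ext)
      fix m
      show "bb r m = (zeros \<oplus>\<^sub>c bb (2*r)) m"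
        using a bb_low[of r m] bb_zero[of r] by (cases "m=0") (auto simp: join_def zeros_def)
    qed }
  { assume a: "1/2 \<le> r \<and> r < 1"
    show "bb r = bb (2*r-1) \<oplus>\<^sub>c ones"
    proof (rule ext)
      fix m
      show "bb r m = (bb (2*r-1) \<oplus>\<^sub>c ones) m"
      proof (cases "r = 1/2")
        case True
        show ?thesis using bb_low[of "1/2" m] bb_zero[of "1/2"] unfolding True
          by (cases "m=0") (auto simp: join_def ones_def)
      next
        case False
        then show ?thesis using a bb_high[of r m] bb_zero[of r] bb_zero[of "2*r-1"]
          by (cases "m=0") (auto simp: join_def ones_def)
      qed
    qed }
  { assume "r \<notin> {0..1}"
    then show "bb r = zeros" by (intro ext) (auto simp: bb_out zeros_def) }
qed

lemma spec_zero:
  assumes f: "b_spec f"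
  shows "0 < r \<Longrightarrow> r < 1 \<Longrightarrow> 1 - r \<ge> 1/2^n \<Longrightarrow> \<not> f r 0"
proof (induction n arbitrary: r)
  case 0
  then show ?case by simp
next
  case (Suc n)
  show ?case
  proof (cases "r \<le> 1/2")
    case True
    then show ?thesis using f Suc.prems unfolding b_spec_def by (auto simp: join_def zeros_def)
  next
    case False
    have "f r = f (2*r-1) \<oplus>\<^sub>c ones" using f False Suc.prems unfolding b_spec_def by auto
    hence "f r 0 = f (2*r-1) 0" by (simp add: join_def)
    moreover have "\<not> f (2*r-1) 0"
      using Suc.prems False by (intro Suc.IH) (auto simp: field_simps)
    ultimately show ?thesis by simp
  qed
qed

lemma spec_unique:
  assumes f: "b_spec f"
  shows "f r m = bb r m"
proof (induction m arbitrary: r rule: less_induct)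
  case (less m)
  have f0: "f 0 = zeros" and f1: "f 1 = ones"
    and fl: "\<And>r. 0 < r \<Longrightarrow> r \<le> 1/2 \<Longrightarrow> f r = zeros \<oplus>\<^sub>c f (2*r)"
    and fh: "\<And>r. 1/2 \<le> r \<Longrightarrow> r < 1 \<Longrightarrow> f r = f (2*r-1) \<oplus>\<^sub>c ones"
    and fo: "\<And>r. r \<notin> {0..1} \<Longrightarrow> f r = zeros"
    using f unfolding b_spec_def by auto
  consider "r < 0 \<or> r > 1" | "r = 0" | "r = 1" | "0 < r" "r < 1" by linarith
  then show ?case
  proof cases
    case 1 then show ?thesis using fo[of r] by (auto simp: bb_out zeros_def)
  next
    case 2 then show ?thesis using f0 by (auto simp: zeros_def)
  next
    case 3 then show ?thesis using f1 by (auto simp: ones_def)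
  next
    case 4
    show ?thesis
    proof (cases "m = 0")
      case True
      obtain n where "(1/2::real)^n < 1 - r" using real_arch_pow_inv[of "1-r" "1/2"] 4 by auto
      hence "1 - r \<ge> 1/2^n" by (simp add: power_one_over)
      then have "\<not> f r 0" using spec_zero[OF f] 4 by blast
      then show ?thesis using True 4 bb_zero[of r] by simp
    next
      case False
      have lt: "m div 2 < m" using False by simp
      show ?thesis
      proof (cases "r \<le> 1/2")
        case True
        then show ?thesis using fl[of r] 4 False less.IH[OF lt, of "2*r"]
          by (auto simp: bb_low join_def zeros_def)
      next
        case F: False
        then show ?thesis using fh[of r] 4 False less.IH[OF lt, of "2*r-1"]
          by (auto simp: bb_high join_def ones_def)
      qed
    qed
  qed
qed

lemma b_eq: "b = bb"
  unfolding b_def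
proof (rule the_equality)
  show "b_spec bb" by (rule bb_spec)
  fix f assume "b_spec f" then show "f = bb" using spec_unique by blast
qed

lemma b_spec_b: "b_spec b" using bb_spec b_eq by simp

definition ind :: "bool \<Rightarrow> real" where "ind P = (if P then 1 else 0)"
definition cnt :: "cantor \<Rightarrow> nat \<Rightarrow> real" where "cnt Z n = (\<Sum>k<n. ind (Z k))"

lemma card_cnt: "real (card {k. k<n \<and> Z k}) = cnt Z n"
proof (induction n)
  case 0 then show ?case by (simp add: cnt_def)
next
  case (Suc n)
  have e: "{k. k<Suc n \<and> Z k} = (if Z n then insert n {k. k<n \<and> Z k} else {k. k<n \<and> Z k})"
    by (auto simp: less_Suc_eq)
  show ?case using Suc by (simp add: e cnt_def ind_def)
qed

lemma join_cnt: "cnt (X \<oplus>\<^sub>c Y) n = cnt X ((n+1) div 2) + cnt Y (n div 2)"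
proof (induction n)
  case 0 then show ?case by (simp add: cnt_def)
next
  case (Suc n)
  show ?case
  proof (cases "even n")
    case True
    then obtain q where q: "n = 2*q" by blast
    have "cnt (X \<oplus>\<^sub>c Y) (Suc n) = cnt (X \<oplus>\<^sub>c Y) n + ind (X q)"
      by (simp add: cnt_def join_def q)
    also have "\<dots> = cnt X (Suc q) + cnt Y q" using Suc by (simp add: q cnt_def)
    finally show ?thesis by (simp add: q)
  next
    case False
    then obtain q where q: "n = 2*q+1" using oddE by blast
    have "cnt (X \<oplus>\<^sub>c Y) (Suc n) = cnt (X \<oplus>\<^sub>c Y) n + ind (Y q)"
      by (simp add: cnt_def join_def q)
    also have "\<dots> = cnt X (Suc q) + cnt Y (Suc q)" using Suc by (simp add: q cnt_def)
    finally show ?thesis by (simp add: q)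
  qed
qed

lemma cnt_zeros[simp]: "cnt zeros n = 0" by (simp add: cnt_def zeros_def ind_def)
lemma cnt_ones[simp]: "cnt ones n = real n" by (simp add: cnt_def ones_def ind_def)

lemma err_bound:
  "0 \<le> r \<Longrightarrow> r \<le> 1 \<Longrightarrow> n \<le> 2^k \<Longrightarrow> \<bar>cnt (b r) n - r * n\<bar> \<le> real k + 1"
proof (induction k arbitrary: n r)
  case 0
  then have "n = 0 \<or> n = 1" by auto
  then show ?case
  proof
    assume "n = 0" then show ?thesis by (simp add: cnt_def)
  next
    assume n1: "n = 1"
    have "cnt (b r) 1 = 0 \<or> cnt (b r) 1 = 1" by (simp add: cnt_def ind_def)
    then show ?thesis using n1 0 by auto
  qed
next
  case (Suc k)
  have spec: "b_spec b" by (rule b_spec_b)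
  obtain q where q: "n = 2*q \<or> n = 2*q+1" by (metis oddE evenE)
  have qk: "q \<le> 2^k" "(n+1) div 2 \<le> 2^k" using Suc.prems(3) q by auto
  consider "r = 0" | "r = 1" | "0 < r" "r \<le> 1/2" | "1/2 \<le> r" "r < 1" using Suc.prems by linarith
  then show ?case
  proof cases
    case 1 then show ?thesis using spec unfolding b_spec_def by simp
  next
    case 2 then show ?thesis using spec unfolding b_spec_def by simp
  next
    case 3
    then have br: "b r = zeros \<oplus>\<^sub>c b (2*r)" using spec unfolding b_spec_def by auto
    have nd: "n div 2 = q" using q by auto
    have IH: "\<bar>cnt (b (2*r)) q - (2*r) * q\<bar> \<le> real k + 1"
      using Suc.IH[of "2*r" q] 3 qk by auto
    have c: "cnt (b r) n = cnt (b (2*r)) q" by (simp add: br join_cnt nd)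
    have "\<bar>2*r*q - r*n\<bar> \<le> 1" using q 3 by (auto simp: algebra_simps)
    then show ?thesis using IH c by simp
  next
    case 4
    then have br: "b r = b (2*r-1) \<oplus>\<^sub>c ones" using spec unfolding b_spec_def by auto
    define q' where "q' = (n+1) div 2"
    have nd: "n div 2 = q" using q by auto
    have IH: "\<bar>cnt (b (2*r-1)) q' - (2*r-1) * q'\<bar> \<le> real k + 1"
      using Suc.IH[of "2*r-1" q'] 4 qk by (auto simp: q'_def)
    have c: "cnt (b r) n = cnt (b (2*r-1)) q' + q" by (simp add: br join_cnt nd q'_def)
    have "\<bar>(2*r-1)*q' + q - r*n\<bar> \<le> 1"
      using q 4 by (auto simp: q'_def algebra_simps)
    then show ?thesis using IH c by simp
  qed
qed

lemma err_log:
  assumes "0 \<le> r" "r \<le> 1" "n \<ge> 1"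
  shows "\<bar>cnt (b r) n - r * n\<bar> \<le> log 2 n + 2"
proof -
  have "n \<le> 2^(floor_log n + 1)" using floor_log_exp2_ge[of n] by simp
  then have "\<bar>cnt (b r) n - r * n\<bar> \<le> real (floor_log n + 1) + 1"
    using err_bound assms by blast
  moreover have "real (floor_log n) \<le> log 2 n"
    using assms(3) by (simp add: floor_log_altdef)
  ultimately show ?thesis by simp
qed

abbreviation cs where "cs \<equiv> chunk_start"

lemma cs_Suc[simp]: "cs (Suc j) = cs j + j" by (simp add: chunk_start_def)
lemma cs_0[simp]: "cs 0 = 0" by (simp add: chunk_start_def)

lemma cs_mono: "j \<le> j' \<Longrightarrow> cs j \<le> cs j'"
  unfolding chunk_start_def by (rule sum_mono2) auto

lemma cs_twice: "2 * cs J = J * (J - 1)"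
  by (induction J) (auto simp: algebra_simps)

definition ci :: "nat \<Rightarrow> nat" where "ci k = (LEAST j. k < cs (Suc j))"

lemma ci_ex: "k < cs (Suc (Suc k))"
  by (induction k) auto

lemma ci_prop: "cs (ci k) \<le> k \<and> k < cs (Suc (ci k))"
proof -
  have a: "k < cs (Suc (ci k))" unfolding ci_def by (rule LeastI[of _ "Suc k"]) (rule ci_ex)
  have "cs (ci k) \<le> k"
  proof (cases "ci k")
    case 0 then show ?thesis by simp
  next
    case (Suc j)
    have "\<not> k < cs (Suc j)"
    proof
      assume "k < cs (Suc j)"
      then have "ci k \<le> j" unfolding ci_def by (rule Least_le)
      then show False using Suc by simp
    qed
    then show ?thesis using Suc by simp
  qed
  with a show ?thesis by simp
qed

lemma ci_unique: assumes "cs j \<le> k" "k < cs (Suc j)" shows "ci k = j"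
proof -
  have p: "cs (ci k) \<le> k" "k < cs (Suc (ci k))" using ci_prop by auto
  show ?thesis
  proof (rule ccontr)
    assume "ci k \<noteq> j"
    then consider "ci k < j" | "j < ci k" by linarith
    then show False
    proof cases
      case 1 then have "cs (Suc (ci k)) \<le> cs j" by (intro cs_mono) simp
      then show False using p assms by simp
    next
      case 2 then have "cs (Suc j) \<le> cs (ci k)" by (intro cs_mono) simp
      then show False using p assms by simp
    qed
  qed
qed

lemma ci_ge1: "ci k \<ge> 1"
proof (rule ccontr)
  assume "\<not> ci k \<ge> 1"
  then have "ci k = 0" by simp
  then show False using ci_prop[of k] by simp
qed

lemma Mix_eq: "Mix zeros ones r = (\<lambda>k. b r (ci k))"
  unfolding Mix_def
proof (rule the_equality)
  show "\<forall>j. \<forall>k\<in>chunk j. b r (ci k) = (if b r j then ones k else zeros k)"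
    by (auto simp: chunk_def ones_def zeros_def ci_unique)
  fix Z assume Z: "\<forall>j. \<forall>k\<in>chunk j. Z k = (if b r j then ones k else zeros k)"
  show "Z = (\<lambda>k. b r (ci k))"
  proof
    fix k
    have "k \<in> chunk (ci k)" using ci_prop[of k] by (simp add: chunk_def)
    then show "Z k = b r (ci k)" using Z by (auto simp: ones_def zeros_def)
  qed
qed

lemma cnt_chunk:
  assumes "d \<le> J"
  shows "cnt (\<lambda>k. b r (ci k)) (cs J + d) = cnt (\<lambda>k. b r (ci k)) (cs J) + d * ind (b r J)"
  using assms
proof (induction d)
  case 0 then show ?case by simp
next
  case (Suc d)
  have "ci (cs J + d) = J" using Suc.prems by (intro ci_unique) auto
  then show ?case using Suc by (simp add: cnt_def algebra_simps)
qed

lemma cnt_cs: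
  fixes r :: real
  defines "e \<equiv> \<lambda>j. cnt (b r) j - r * j"
  shows "cnt (\<lambda>k. b r (ci k)) (cs J) - r * cs J = J * e J - (\<Sum>j<J. e (Suc j))"
proof (induction J)
  case 0 then show ?case by (simp add: e_def cnt_def)
next
  case (Suc J)
  have "cnt (\<lambda>k. b r (ci k)) (cs (Suc J)) = cnt (\<lambda>k. b r (ci k)) (cs J) + J * ind (b r J)"
    using cnt_chunk[of J J r] by simp
  moreover have eq: "e (Suc J) = e J + ind (b r J) - r" by (simp add: e_def cnt_def algebra_simps)
  moreover have "real J * e (Suc J) = real J * e J + real J * ind (b r J) - real J * r"
    by (simp only: eq) (simp add: algebra_simps)
  ultimately show ?case using Suc by (simp add: algebra_simps)
qed

lemma J_sq:
  fixes J N :: nat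
  assumes "J * (J - 1) \<le> 2 * N" "N \<ge> 1"
  shows "J * J \<le> 9 * N"
proof (cases "J \<le> 3")
  case True
  then have "J * J \<le> 9" using mult_le_mono[of J 3 J 3] by simp
  then show ?thesis using assms(2) by linarith
next
  case False
  then have "J * 3 \<le> (J - 1) * 3 + 3" by simp
  have "J * J \<le> 2 * (J * (J - 1))"
  proof -
    have "J \<le> 2 * (J - 1)" using False by simp
    then have "J * J \<le> J * (2 * (J - 1))" by simp
    then show ?thesis by (simp add: mult.left_commute)
  qed
  then show ?thesis using assms(1) by linarith
qed

lemma main_bound:
  fixes r :: real
  assumes r: "0 \<le> r" "r \<le> 1" and N: "N \<ge> 1"
  shows "\<bar>cnt (\<lambda>k. b r (ci k)) N - r * N\<bar> \<le> 3 * sqrt N * (2 * log 2 (3 * sqrt N) + 5)"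
proof -
  define Z where "Z = (\<lambda>k. b r (ci k))"
  define J where "J = ci N"
  define e where "e = (\<lambda>j. cnt (b r) j - r * j)"
  define d where "d = N - cs J"
  have J1: "J \<ge> 1" unfolding J_def by (rule ci_ge1)
  have p: "cs J \<le> N" "N < cs J + J" using ci_prop[of N] by (auto simp: J_def)
  have dJ: "d \<le> J" "N = cs J + d" using p by (auto simp: d_def)
  have c1: "cnt Z N = cnt Z (cs J) + d * ind (b r J)"
    unfolding Z_def using cnt_chunk[OF dJ(1), of r] dJ(2) by simp
  have c2: "cnt Z (cs J) - r * cs J = J * e J - (\<Sum>j<J. e (Suc j))"
    unfolding Z_def e_def by (rule cnt_cs)
  define E where "E = log 2 J + 2"
  have eb: "\<bar>e j\<bar> \<le> E" if "1 \<le> j" "j \<le> J" for j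
  proof -
    have "\<bar>e j\<bar> \<le> log 2 j + 2" unfolding e_def using err_log[OF r that(1)] .
    moreover have "log 2 j \<le> log 2 J" using that by simp
    ultimately show ?thesis by (simp add: E_def)
  qed
  have s: "\<bar>\<Sum>j<J. e (Suc j)\<bar> \<le> J * E"
  proof -
    have "\<bar>\<Sum>j<J. e (Suc j)\<bar> \<le> (\<Sum>j<J. \<bar>e (Suc j)\<bar>)" by (rule sum_abs)
    also have "\<dots> \<le> real (card {..<J}) * E" by (rule sum_bounded_above) (auto intro: eb)
    finally show ?thesis by simp
  qed
  have eJ: "\<bar>J * e J\<bar> \<le> J * E" using eb[OF J1 order.refl]
    by (simp add: abs_mult mult_left_mono)
  have di: "\<bar>d * (ind (b r J) - r)\<bar> \<le> J"
  proof -
    have "\<bar>ind (b r J) - r\<bar> \<le> 1" using r by (auto simp: ind_def)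
    then have "\<bar>d * (ind (b r J) - r)\<bar> \<le> d * 1"
      using mult_left_mono[of _ 1 "real d"] by (simp add: abs_mult)
    then show ?thesis using dJ(1) by simp
  qed
  have "cnt Z N - r * N = (cnt Z (cs J) - r * cs J) + d * (ind (b r J) - r)"
    using c1 dJ(2) by (simp add: algebra_simps)
  then have b1: "\<bar>cnt Z N - r * N\<bar> \<le> J * (2 * log 2 J + 5)"
    using c2 s eJ di unfolding E_def by (simp add: algebra_simps)
  have "J * (J - 1) \<le> 2 * N" using p(1) cs_twice[of J] by simp
  then have "J * J \<le> 9 * N" using J_sq N by blast
  then have "real J * real J \<le> 9 * real N" by (metis of_nat_le_iff of_nat_mult of_nat_numeral)
  then have "real J \<le> sqrt (9 * real N)" by (simp add: real_le_rsqrt power2_eq_square)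
  then have Js: "real J \<le> 3 * sqrt N" by (simp add: real_sqrt_mult)
  have "log 2 J \<le> log 2 (3 * sqrt N)" using Js J1 by (intro log_mono) auto
  then have "J * (2 * log 2 J + 5) \<le> 3 * sqrt N * (2 * log 2 (3 * sqrt N) + 5)"
    using Js J1 by (intro mult_mono) auto
  then show ?thesis using b1 unfolding Z_def by linarith
qed

theorem lemma2p9:
  fixes r :: real
  assumes "0 \<le> r" and "r \<le> 1"
  shows "has_density (Mix zeros ones r) r"
proof -
  define Z where "Z = (\<lambda>k. b r (ci k))"
  define H where "H = (\<lambda>N::nat. 3 * sqrt (real N) * (2 * log 2 (3 * sqrt (real N)) + 5) / real N)"
  have H0: "H \<longlonglongrightarrow> 0" unfolding H_def by real_asymp
  have ev: "eventually (\<lambda>N. norm (cnt Z N / real N - r) \<le> norm (H N) * 1) sequentially"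
    using eventually_ge_at_top[of 1]
  proof eventually_elim
    case (elim N)
    then have pos: "real N > 0" by simp
    have "cnt Z N / real N - r = (cnt Z N - r * N) / real N" using pos by (simp add: field_simps)
    then have "norm (cnt Z N / real N - r) = \<bar>cnt Z N - r * N\<bar> / real N" by simp
    also have "\<dots> \<le> H N" unfolding H_def Z_def
      using main_bound[OF assms elim] pos by (simp add: divide_right_mono)
    finally show ?case by simp
  qed
  have "(\<lambda>N. cnt Z N / real N - r) \<longlonglongrightarrow> 0" by (rule tendsto_0_le[OF H0 ev])
  then have "(\<lambda>N. cnt Z N / real N - r + r) \<longlonglongrightarrow> 0 + r" by (intro tendsto_add) auto
  then have "(\<lambda>N. cnt Z N / real N) \<longlonglongrightarrow> r" by simp
  then show ?thesis unfolding has_density_def Mix_eq card_cnt Z_def .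
qed

end
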